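(* Let $R$ be a $*$-ring and $a\in R$. The following are equivalent: (1) There exist a projection $e$, a unit $u$ and an integer $m\geq1$ such that $a^m=eu$ and $a,e,u$ pairwise commute. (2) There exist a projection $f$ and a unit $v$ such that $a=f+v$, $fv=vf$ and $af$ is nilpotent. (3) There exists a projection $p$ with $ap=pa$ such that $ap$ is a unit of the corner ring $pRp$ and $a(1-p)$ is nilpotent. (4) There exists $b\in R$ with $ab=ba$ such that $(ab)^*=ab$, $b=bab$ and $a-a^2b$ is nilpotent.
   Context: A $*$-ring is a ring with identity with an involution $*$ ($(x+y)^*=x^*+y^*$, $(xy)^*=y^*x^*$, $(x^* )^*=x$). A projection is $p$ with $p^2=p=p^*$. *)

theory Defs
  imports Main
begin

class star_ring = ring_1 +
  fixes star :: "'a \<Rightarrow> 'a"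
  assumes star_add: "star (x + y) = star x + star y"
      and star_mult: "star (x * y) = star y * star x"
      and star_star: "star (star x) = x"

definition projection :: "'a::star_ring \<Rightarrow> bool" where
  "projection p \<longleftrightarrow> p * p = p \<and> star p = p"

definition unit_elem :: "'a::ring_1 \<Rightarrow> bool" where
  "unit_elem u \<longleftrightarrow> (\<exists>w. u * w = 1 \<and> w * u = 1)"

definition nilpotent :: "'a::ring_1 \<Rightarrow> bool" where
  "nilpotent x \<longleftrightarrow> (\<exists>n::nat. x ^ n = 0)"

text \<open>y is a unit of the corner ring pRp (whose identity is p).\<close>
definition corner_unit :: "'a::ring_1 \<Rightarrow> 'a \<Rightarrow> bool" where
  "corner_unit p y \<longleftrightarrow> y = p * y * p \<and>
     (\<exists>x. x = p * x * p \<and> y * x = p \<and> x * y = p)"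

end

theory Submission
  imports Defs
begin

lemma pow_idem_comm:
  fixes a q :: "'a::ring_1"
  assumes aq: "a * q = q * a" and qq: "q * q = q"
  shows "(a * q) ^ Suc n = a ^ Suc n * q"
proof (induction n)
  case 0 then show ?case by simp
next
  case (Suc n)
  have c: "q * a ^ Suc n = a ^ Suc n * q"
    using power_commuting_commutes[OF aq, of "Suc n"] by simp
  have "(a * q) ^ Suc (Suc n) = a * q * (a ^ Suc n * q)"
    using Suc by (simp only: power_Suc)
  also have "\<dots> = a * (q * a ^ Suc n) * q" by (simp only: mult.assoc)
  also have "\<dots> = a * a ^ Suc n * (q * q)" by (simp only: c mult.assoc)
  also have "\<dots> = a ^ Suc (Suc n) * q" by (simp only: qq power_Suc[symmetric])
  finally show ?case .
qed

lemma corner_pow: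
  fixes y x p :: "'a::ring_1"
  assumes yx: "y * x = p" and px: "p * x = x"
  shows "y ^ Suc n * x ^ Suc n = p"
proof (induction n)
  case 0 then show ?case using yx by simp
next
  case (Suc n)
  have h1: "y ^ Suc (Suc n) = y ^ Suc n * y" by (rule power_Suc2)
  have h2: "x ^ Suc (Suc n) = x * x ^ Suc n" by (rule power_Suc)
  have h3: "p * x ^ Suc n = x ^ Suc n" using px by (metis power_Suc mult.assoc)
  have "y ^ Suc (Suc n) * x ^ Suc (Suc n) = y ^ Suc n * (y * x) * x ^ Suc n"
    by (simp only: h1 h2 mult.assoc)
  also have "\<dots> = y ^ Suc n * x ^ Suc n"
    using yx h3 by (simp only: mult.assoc)
  finally show ?case using Suc by simp
qed

lemma one_minus_idem:
  fixes p :: "'a::ring_1"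
  assumes "p * p = p" shows "(1 - p) * (1 - p) = 1 - p" "p * (1 - p) = 0" "(1 - p) * p = 0"
  using assms by (simp_all add: algebra_simps)

lemma s13:
  fixes a :: "'a::ring_1"
  assumes e: "e * e = e" and u: "u * w = 1" "w * u = 1" and m: "m \<ge> 1"
    and am: "a ^ m = e * u" and ae: "a * e = e * a" and au: "a * u = u * a" and eu: "e * u = u * e"
  shows "a * e = e * (a * e) * e \<and> (\<exists>x. x = e * x * e \<and> a * e * x = e \<and> x * (a * e) = e)
         \<and> nilpotent (a * (1 - e))"
proof -
  obtain k where mk: "m = Suc k" using m by (cases m) auto
  have wa: "w * a = a * w"
  proof -
    have "w * a = w * a * (u * w)" using u by simp
    also have "\<dots> = w * (a * u) * w" by (simp add: mult.assoc)
    also have "\<dots> = (w * u) * a * w" using au by (simp add: mult.assoc)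
    finally show ?thesis using u by simp
  qed
  have we: "w * e = e * w"
  proof -
    have "w * e = w * e * (u * w)" using u by simp
    also have "\<dots> = w * (e * u) * w" by (simp add: mult.assoc)
    also have "\<dots> = (w * u) * e * w" using eu by (simp add: mult.assoc)
    finally show ?thesis using u by simp
  qed
  define y where "y = a * e"
  have ye: "y * e = y" "e * y = y" unfolding y_def using ae e
    by (metis mult.assoc)+
  have yw: "y * w = w * y" unfolding y_def using wa we by (metis mult.assoc)
  have ym: "y ^ m = e * u" unfolding y_def mk
    using pow_idem_comm[OF ae e, of k] am mk e eu by (metis mult.assoc)
  define x where "x = y ^ k * e * w"
  have ey: "e * y ^ k = y ^ k * e" using power_commuting_commutes[of y e k] ye by simp
  have x1: "y * x = e"
  proof -
    have "y * x = y ^ m * e * w" unfolding x_def mk by (simp add: mult.assoc)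
    also have "\<dots> = e * u * e * w" using ym by simp
    also have "\<dots> = e * (u * e) * w" by (simp only: mult.assoc)
    also have "\<dots> = e * (e * u) * w" by (simp only: eu)
    also have "\<dots> = e * u * w" using e by (metis mult.assoc)
    also have "\<dots> = e" using u by (metis mult.assoc mult_1_right)
    finally show ?thesis .
  qed
  have x2: "x * y = e"
  proof -
    have wy: "w * y = y * w" using yw by simp
    have "x * y = y ^ k * e * (w * y)" unfolding x_def by (simp add: mult.assoc)
    also have "\<dots> = y ^ k * (e * y) * w" using wy by (simp add: mult.assoc)
    also have "\<dots> = y ^ k * y * w" using ye by simp
    also have "\<dots> = y ^ m * w" unfolding mk by (simp only: power_Suc2)
    also have "\<dots> = e" using ym u by (simp add: mult.assoc)
    finally show ?thesis .
  qed
  have x3: "x = e * x * e"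
  proof -
    have "e * x * e = (e * y ^ k) * (e * w * e)" unfolding x_def by (simp add: mult.assoc)
    also have "\<dots> = y ^ k * (e * (e * (e * w)))" using ey we by (simp add: mult.assoc)
    also have "e * (e * (e * w)) = e * w" using e by (metis mult.assoc)
    finally show ?thesis unfolding x_def by (simp add: mult.assoc)
  qed
  have y3: "y = e * y * e" using ye by simp
  have nil: "(a * (1 - e)) ^ m = 0"
  proof -
    have c: "a * (1 - e) = (1 - e) * a" using ae by (simp add: algebra_simps)
    have "(a * (1 - e)) ^ m = a ^ m * (1 - e)"
      unfolding mk by (rule pow_idem_comm[OF c one_minus_idem(1)[OF e]])
    also have "\<dots> = u * (e * (1 - e))" using am eu by (simp add: mult.assoc)
    finally show ?thesis using one_minus_idem(2)[OF e] by simp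
  qed
  show ?thesis using x1 x2 x3 y3 nil unfolding y_def nilpotent_def by blast
qed


lemma s31:
  fixes a :: "'a::ring_1"
  assumes pp: "p * p = p" and ap: "a * p = p * a" and y3: "a * p = p * (a * p) * p"
    and x3: "x = p * x * p" and yx: "a * p * x = p" and xy: "x * (a * p) = p"
    and nl: "(a * (1 - p)) ^ n = 0"
  shows "\<exists>u w (m::nat). u * w = 1 \<and> w * u = 1 \<and> m \<ge> 1 \<and> a ^ m = p * u \<and>
            a * u = u * a \<and> p * u = u * p"
proof -
  define m where "m = Suc n"
  define y where "y = a * p"
  have px: "p * x = x" using x3 pp by (metis mult.assoc)
  have xp: "x * p = x" using x3 pp by (metis mult.assoc)
  have py: "p * y = y" using y3 pp unfolding y_def by (metis mult.assoc)
  have c1: "a * (1 - p) = (1 - p) * a" using ap by (simp add: algebra_simps)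
  have amp: "a ^ m * (1 - p) = 0"
  proof -
    have "a ^ m * (1 - p) = (a * (1 - p)) ^ m"
      unfolding m_def by (rule pow_idem_comm[OF c1 one_minus_idem(1)[OF pp], symmetric])
    also have "\<dots> = 0" unfolding m_def using nl by simp
    finally show ?thesis .
  qed
  define Y where "Y = a ^ m * p"
  have Yy: "Y = y ^ m" unfolding Y_def y_def m_def by (rule pow_idem_comm[OF ap pp, symmetric])
  have amY: "a ^ m = Y" unfolding Y_def using amp by (simp add: algebra_simps)
  have pam: "p * a ^ m = a ^ m * p" using power_commuting_commutes[OF ap, of m] by simp
  define X where "X = x ^ m"
  have YX: "Y * X = p" unfolding Yy X_def m_def using corner_pow[of y x p n] yx px y_def by simp
  have XY: "X * Y = p" unfolding Yy X_def m_def using corner_pow[of x y p n] xy py y_def by simp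
  have q1: "(1 - p) * X = 0" unfolding X_def m_def power_Suc using px
    by (simp add: algebra_simps mult.assoc[symmetric])
  have q2: "X * (1 - p) = 0" unfolding X_def m_def power_Suc2 using xp
    by (simp add: algebra_simps mult.assoc)
  have q3: "Y * (1 - p) = 0" unfolding Y_def using pp by (simp add: algebra_simps mult.assoc)
  have q4: "(1 - p) * Y = 0" unfolding Y_def using pp pam
    by (simp add: algebra_simps mult.assoc[symmetric])
  have pY: "p * Y = Y" unfolding Y_def using pp pam by (metis mult.assoc)
  have Yp: "Y * p = Y" unfolding Y_def using pp by (metis mult.assoc)
  have aY: "a * Y = Y * a"
  proof -
    have "a * Y = a ^ m * a * p" unfolding Y_def by (simp add: power_commutes mult.assoc)
    also have "\<dots> = Y * a" unfolding Y_def using ap by (simp add: mult.assoc)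
    finally show ?thesis .
  qed
  have qq: "(1 - p) * (1 - p) = 1 - p" using one_minus_idem(1)[OF pp] .
  define u where "u = Y + (1 - p)"
  define w where "w = X + (1 - p)"
  have "u * w = Y * X + Y * (1 - p) + (1 - p) * X + (1 - p) * (1 - p)"
    unfolding u_def w_def by (simp add: distrib_left distrib_right add.assoc)
  hence uw: "u * w = 1" using YX q1 q3 qq by simp
  have "w * u = X * Y + X * (1 - p) + (1 - p) * Y + (1 - p) * (1 - p)"
    unfolding u_def w_def by (simp add: distrib_left distrib_right add.assoc)
  hence wu: "w * u = 1" using XY q2 q4 qq by simp
  have pu: "p * u = Y" unfolding u_def using pY one_minus_idem(2)[OF pp] by (simp add: distrib_left)
  have up: "u * p = Y" unfolding u_def using Yp one_minus_idem(3)[OF pp] by (simp add: distrib_right)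
  have au: "a * u = u * a" unfolding u_def using aY c1 by (simp add: distrib_left distrib_right)
  show ?thesis using uw wu pu up au amY unfolding m_def
    by (intro exI[of _ u] exI[of _ w] exI[of _ "Suc n"]) (simp add: m_def)
qed

lemma star_one: "star (1::'a::star_ring) = 1"
  by (metis mult_1_left mult_1_right star_mult star_star)

lemma star_zero: "star (0::'a::star_ring) = 0"
  by (metis add_cancel_right_right star_add)

lemma star_minus: "star (- x::'a::star_ring) = - star x"
  by (metis add.right_inverse add_eq_0_iff star_add star_zero)

lemma star_diff: "star (x - y::'a::star_ring) = star x - star y"
  by (metis diff_conv_add_uminus star_add star_minus)

lemma proj_compl: "projection (p::'a::star_ring) \<Longrightarrow> projection (1 - p)"
  unfolding projection_def by (simp add: star_diff star_one algebra_simps)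

lemma sum_comm:
  fixes M :: "'a::ring_1"
  shows "(\<Sum>i<k. M ^ i) * M = M * (\<Sum>i<k. M ^ i)"
  by (simp add: sum_distrib_left sum_distrib_right power_commutes)

lemma geo_inv1:
  fixes M :: "'a::ring_1"
  shows "(1 - M) * (\<Sum>i<k. M ^ i) = 1 - M ^ k"
proof (induction k)
  case 0 then show ?case by simp
next
  case (Suc k)
  have "(1 - M) * (\<Sum>i<Suc k. M ^ i) = (1 - M) * (\<Sum>i<k. M ^ i) + (1 - M) * M ^ k"
    by (simp add: distrib_left)
  also have "\<dots> = 1 - M ^ Suc k" using Suc.IH by (simp add: algebra_simps)
  finally show ?case .
qed

lemma geo_inv:
  fixes M :: "'a::ring_1"
  shows "(1 - M) * (\<Sum>i<k. M ^ i) = 1 - M ^ k \<and> (\<Sum>i<k. M ^ i) * (1 - M) = 1 - M ^ k"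
proof -
  have "(\<Sum>i<k. M ^ i) * (1 - M) = (1 - M) * (\<Sum>i<k. M ^ i)"
    using sum_comm[of M k] by (simp add: algebra_simps)
  then show ?thesis using geo_inv1[of M k] by simp
qed

lemma nil_unit:
  fixes M :: "'a::ring_1"
  assumes "M ^ k = 0" shows "unit_elem (1 - M)"
  unfolding unit_elem_def using geo_inv[of M k] assms by auto

lemma comm_pow: "(x::'a::ring_1) * y = y * x \<Longrightarrow> (x * y) ^ n = x ^ n * y ^ n"
proof (induction n)
  case 0 then show ?case by simp
next
  case (Suc n)
  have c: "y * x ^ n = x ^ n * y" using power_commuting_commutes[of x y n] Suc.prems by simp
  have "(x * y) ^ Suc n = x * y * (x ^ n * y ^ n)" using Suc by simp
  also have "\<dots> = x * (y * x ^ n) * y ^ n" by (simp add: mult.assoc)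
  also have "\<dots> = x ^ Suc n * y ^ Suc n" by (simp add: c mult.assoc)
  finally show ?case .
qed

lemma unit_plus_nil:
  fixes u :: "'a::ring_1"
  assumes uw: "u * w = 1" "w * u = 1" and uN: "u * N = N * u" and nN: "N ^ k = 0"
  shows "unit_elem (u + N)"
proof -
  have wN: "w * N = N * w"
  proof -
    have "w * N = w * N * (u * w)" using uw by simp
    also have "\<dots> = w * (N * u) * w" by (simp only: mult.assoc)
    also have "\<dots> = w * (u * N) * w" by (simp only: uN)
    also have "\<dots> = (w * u) * N * w" by (simp only: mult.assoc)
    finally show ?thesis using uw by simp
  qed
  have "(- (w * N)) ^ k = 0"
    by (subst power_minus) (simp only: comm_pow[OF wN] nN mult_zero_right)
  then obtain T where T: "(1 + w * N) * T = 1" "T * (1 + w * N) = 1"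
    using nil_unit[of "- (w * N)" k] unfolding unit_elem_def by auto
  have e0: "u * (1 + w * N) = u + (u * w) * N" by (simp only: distrib_left mult_1_right mult.assoc)
  have e: "u + N = u * (1 + w * N)" using e0 uw by simp
  have f1: "u * (1 + w * N) * (T * w) = u * ((1 + w * N) * T) * w" by (simp only: mult.assoc)
  have f2: "(T * w) * (u * (1 + w * N)) = T * (w * u) * (1 + w * N)" by (simp only: mult.assoc)
  have "(u + N) * (T * w) = 1" unfolding e f1 using T uw by simp
  moreover have "(T * w) * (u + N) = 1" unfolding e f2 using T uw by simp
  ultimately show ?thesis unfolding unit_elem_def by blast
qed

lemma s23:
  fixes a :: "'a::star_ring"
  assumes "projection f" "unit_elem v" "a = f + v" "f * v = v * f" "nilpotent (a * f)"
  shows "\<exists>p. projection p \<and> a * p = p * a \<and> corner_unit p (a * p) \<and> nilpotent (a * (1 - p))"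
proof -
  from assms obtain w where vw: "v * w = 1" "w * v = 1" unfolding unit_elem_def by auto
  have ff: "f * f = f" using assms(1) unfolding projection_def by simp
  define p where "p = 1 - f"
  have pp: "p * p = p" unfolding p_def using ff by (simp add: algebra_simps)
  have wf: "w * f = f * w"
  proof -
    have "w * f = w * f * (v * w)" using vw by simp
    also have "\<dots> = w * (f * v) * w" by (simp add: mult.assoc)
    also have "\<dots> = (w * v) * f * w" using assms(4) by (simp add: mult.assoc)
    finally show ?thesis using vw by simp
  qed
  have vp: "v * p = p * v" unfolding p_def using assms(4) by (simp add: algebra_simps)
  have wp: "w * p = p * w" unfolding p_def using wf by (simp add: algebra_simps)
  have fp: "f * p = 0" unfolding p_def using ff by (simp add: algebra_simps)
  have ap: "a * p = p * a" unfolding p_def using assms(3,4) ff by (simp add: algebra_simps)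
  have apv: "a * p = v * p" using assms(3) fp by (simp add: distrib_right)
  have c1: "a * p = p * (a * p) * p" using ap pp by (metis mult.assoc)
  have c2: "w * p = p * (w * p) * p" using wp pp by (metis mult.assoc)
  have c3: "a * p * (w * p) = p" unfolding apv
  proof -
    have "v * p * (w * p) = v * (p * w) * p" by (simp add: mult.assoc)
    also have "\<dots> = v * (w * p) * p" by (simp only: wp)
    also have "\<dots> = (v * w) * (p * p)" by (simp only: mult.assoc)
    finally show "v * p * (w * p) = p" using vw pp by simp
  qed
  have c4: "w * p * (a * p) = p" unfolding apv
  proof -
    have "w * p * (v * p) = w * (p * v) * p" by (simp add: mult.assoc)
    also have "\<dots> = w * (v * p) * p" by (simp only: vp)
    also have "\<dots> = (w * v) * (p * p)" by (simp only: mult.assoc)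
    finally show "w * p * (v * p) = p" using vw pp by simp
  qed
  have "projection p" unfolding p_def by (rule proj_compl[OF assms(1)])
  moreover have "corner_unit p (a * p)" unfolding corner_unit_def using c1 c2 c3 c4 by blast
  moreover have "nilpotent (a * (1 - p))" unfolding p_def using assms(5) by simp
  ultimately show ?thesis using ap by blast
qed

lemma s32:
  fixes a :: "'a::star_ring"
  assumes pr: "projection p" and ap: "a * p = p * a" and cu: "corner_unit p (a * p)"
    and nl: "nilpotent (a * (1 - p))"
  shows "\<exists>f v. projection f \<and> unit_elem v \<and> a = f + v \<and> f * v = v * f \<and> nilpotent (a * f)"
proof -
  have pp: "p * p = p" using pr unfolding projection_def by simp
  obtain x where x3: "x = p * x * p" and yx: "a * p * x = p" and xy: "x * (a * p) = p"
    and y3: "a * p = p * (a * p) * p" using cu unfolding corner_unit_def by auto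
  obtain k where nk: "(a * (1 - p)) ^ k = 0" using nl unfolding nilpotent_def by auto
  define q where "q = 1 - p"
  define y where "y = a * p"
  define N where "N = a * q"
  have qq: "q * q = q" unfolding q_def using pp by (simp add: algebra_simps)
  have pq: "p * q = 0" "q * p = 0" unfolding q_def using pp by (simp_all add: algebra_simps)
  have aq: "a * q = q * a" unfolding q_def using ap by (simp add: algebra_simps)
  have yq: "y * q = 0" unfolding y_def using pq ap by (metis mult.assoc mult_zero_right)
  have qy: "q * y = 0" unfolding y_def using pq ap by (metis mult.assoc mult_zero_left)
  have xq: "x * q = 0" using pq x3 by (metis mult.assoc mult_zero_right)
  have qx: "q * x = 0" using pq x3 by (metis mult.assoc mult_zero_left)
  have yN: "y * N = 0" unfolding y_def N_def using pq ap aq by (metis mult.assoc mult_zero_left mult_zero_right)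
  have Ny: "N * y = 0" unfolding y_def N_def using pq ap aq by (metis mult.assoc mult_zero_left mult_zero_right)
  have qN: "q * N = N" unfolding N_def using qq aq by (metis mult.assoc)
  have Nq: "N * q = N" unfolding N_def using qq by (metis mult.assoc)
  have u1: "(y - q) * (x - q) = 1"
    using yx xq qx yq qq unfolding y_def q_def[symmetric] by (simp add: algebra_simps q_def)
  have u2: "(x - q) * (y - q) = 1"
    using xy xq qx qy qq unfolding y_def by (simp add: algebra_simps q_def)
  have cN: "(y - q) * N = N * (y - q)" using yN Ny qN Nq by (simp add: algebra_simps)
  have "unit_elem ((y - q) + N)"
    by (rule unit_plus_nil[OF u1 u2 cN]) (use nk in \<open>simp add: N_def q_def\<close>)
  moreover have "a = q + ((y - q) + N)" unfolding y_def N_def q_def by (simp add: algebra_simps)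
  moreover have "q * ((y - q) + N) = ((y - q) + N) * q"
    using yq qy qN Nq by (simp add: algebra_simps)
  moreover have "projection q" unfolding q_def by (rule proj_compl[OF pr])
  moreover have "nilpotent (a * q)" using nl unfolding q_def .
  ultimately show ?thesis by blast
qed

lemma s34:
  fixes a :: "'a::star_ring"
  assumes pr: "projection p" and ap: "a * p = p * a" and cu: "corner_unit p (a * p)"
    and nl: "nilpotent (a * (1 - p))"
  shows "\<exists>b. a * b = b * a \<and> star (a * b) = a * b \<and> b = b * a * b \<and> nilpotent (a - a ^ 2 * b)"
proof -
  have pp: "p * p = p" and sp: "star p = p" using pr unfolding projection_def by auto
  obtain x where x3: "x = p * x * p" and yx: "a * p * x = p" and xy: "x * (a * p) = p"
    using cu unfolding corner_unit_def by auto
  have xp: "x * p = x" using x3 pp by (metis mult.assoc)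
  have px: "p * x = x" using x3 pp by (metis mult.assoc)
  have ax: "a * x = p" using yx px by (metis mult.assoc)
  have xa: "x * a = p" using xy xp ap by (metis mult.assoc)
  have "a - a ^ 2 * x = a * (1 - p)" using ax by (simp add: power2_eq_square mult.assoc algebra_simps)
  moreover have "x = x * a * x" using xa px by simp
  ultimately show ?thesis using ax xa sp nl by (intro exI[of _ x]) simp
qed

lemma s43:
  fixes a :: "'a::star_ring"
  assumes ab: "a * b = b * a" and st: "star (a * b) = a * b" and bab: "b = b * a * b"
    and nl: "nilpotent (a - a ^ 2 * b)"
  shows "\<exists>p. projection p \<and> a * p = p * a \<and> corner_unit p (a * p) \<and> nilpotent (a * (1 - p))"
proof -
  define p where "p = a * b"
  have pp: "p * p = p" unfolding p_def using bab by (metis mult.assoc)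
  have ap: "a * p = p * a" unfolding p_def using ab by (metis mult.assoc)
  have c1: "a * p = p * (a * p) * p" using ap pp by (metis mult.assoc)
  have bp: "b * p = b" unfolding p_def using bab by (metis mult.assoc)
  have pb: "p * b = b" unfolding p_def using bab ab by (metis mult.assoc)
  have c2: "b = p * b * p" using bp pb by simp
  have c3: "a * p * b = p" unfolding p_def using ab bab by (metis mult.assoc)
  have c4: "b * (a * p) = p" using ap pp c3 ab unfolding p_def by (metis mult.assoc)
  have "projection p" unfolding projection_def p_def using pp st by (simp add: p_def)
  moreover have "corner_unit p (a * p)" unfolding corner_unit_def using c1 c2 c3 c4 by blast
  moreover have "a * (1 - p) = a - a ^ 2 * b" unfolding p_def
    by (simp add: power2_eq_square mult.assoc algebra_simps)
  ultimately show ?thesis using ap nl by auto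
qed

theorem theorem3p2:
  fixes a :: "'a::star_ring"
  shows "((\<exists>e u (m::nat). projection e \<and> unit_elem u \<and> m \<ge> 1 \<and> a ^ m = e * u \<and>
            a * e = e * a \<and> a * u = u * a \<and> e * u = u * e)
       \<longleftrightarrow> (\<exists>f v. projection f \<and> unit_elem v \<and> a = f + v \<and> f * v = v * f \<and> nilpotent (a * f)))
     \<and> ((\<exists>f v. projection f \<and> unit_elem v \<and> a = f + v \<and> f * v = v * f \<and> nilpotent (a * f))
       \<longleftrightarrow> (\<exists>p. projection p \<and> a * p = p * a \<and> corner_unit p (a * p) \<and> nilpotent (a * (1 - p))))
     \<and> ((\<exists>p. projection p \<and> a * p = p * a \<and> corner_unit p (a * p) \<and> nilpotent (a * (1 - p)))
       \<longleftrightarrow> (\<exists>b. a * b = b * a \<and> star (a * b) = a * b \<and> b = b * a * b \<and> nilpotent (a - a ^ 2 * b)))"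
proof -
  let ?P1 = "\<exists>e u (m::nat). projection e \<and> unit_elem u \<and> m \<ge> 1 \<and> a ^ m = e * u \<and>
            a * e = e * a \<and> a * u = u * a \<and> e * u = u * e"
  let ?P2 = "\<exists>f v. projection f \<and> unit_elem v \<and> a = f + v \<and> f * v = v * f \<and> nilpotent (a * f)"
  let ?P3 = "\<exists>p. projection p \<and> a * p = p * a \<and> corner_unit p (a * p) \<and> nilpotent (a * (1 - p))"
  let ?P4 = "\<exists>b. a * b = b * a \<and> star (a * b) = a * b \<and> b = b * a * b \<and> nilpotent (a - a ^ 2 * b)"
  have A: "?P1 \<Longrightarrow> ?P3"
  proof -
    assume ?P1
    then obtain e u m where h: "projection e" "unit_elem u" "m \<ge> 1" "a ^ m = e * u"
      "a * e = e * a" "a * u = u * a" "e * u = u * e" by blast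
    obtain w where uw: "u * w = 1" "w * u = 1" using h(2) unfolding unit_elem_def by blast
    have ee: "e * e = e" using h(1) unfolding projection_def by simp
    have "a * e = e * (a * e) * e \<and> (\<exists>x. x = e * x * e \<and> a * e * x = e \<and> x * (a * e) = e)
         \<and> nilpotent (a * (1 - e))"
      by (rule s13[OF ee uw h(3) h(4) h(5) h(6) h(7)])
    then show ?P3 using h(1,5) unfolding corner_unit_def by blast
  qed
  have B: "?P3 \<Longrightarrow> ?P1"
  proof -
    assume ?P3
    then obtain p where h: "projection p" "a * p = p * a" "corner_unit p (a * p)" "nilpotent (a * (1 - p))"
      by blast
    have pp: "p * p = p" using h(1) unfolding projection_def by simp
    obtain x where x: "x = p * x * p" "a * p * x = p" "x * (a * p) = p" and y3: "a * p = p * (a * p) * p"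
      using h(3) unfolding corner_unit_def by auto
    obtain n where n: "(a * (1 - p)) ^ n = 0" using h(4) unfolding nilpotent_def by blast
    obtain u w m where "u * w = 1" "w * u = 1" "m \<ge> 1" "a ^ m = p * u" "a * u = u * a" "p * u = u * p"
      using s31[OF pp h(2) y3 x n] by blast
    then show ?P1 using h(1,2) unfolding unit_elem_def by blast
  qed
  have C: "?P2 \<longleftrightarrow> ?P3"
  proof
    assume ?P2 then show ?P3 using s23 by blast
  next
    assume ?P3 then show ?P2 using s32 by blast
  qed
  have D: "?P3 \<longleftrightarrow> ?P4"
  proof
    assume ?P3 then show ?P4 using s34 by blast
  next
    assume ?P4 then show ?P3 using s43 by blast
  qed
  show ?thesis using A B C D by blast
qed

end
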